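(* Let $\mathcal{C}$ be a $\beta$-avoiding simplicial complex and let $G$ be its $1$-skeleton. Then $G$ is one of the following: (a) a complete graph $K_N$; (b) two complete graphs glued along a (possibly empty) common clique; (c) an iterated cone over a $4$-cycle, i.e. the join of a $4$-cycle with a complete graph $K_p$ for some $p\ge0$.
   Context: A simplicial complex on a finite ground set $V$ is a family of subsets of $V$ closed under subsets; a vertex $v$ is non-ghost if $\{v\}\in\mathcal{C}$. The $1$-skeleton of $\mathcal{C}$ is the graph whose vertices are the non-ghost vertices and whose edges are the $2$-element faces. For $S\subseteq V$, $\mathcal{C}\setminus S$ is the induced subcomplex $\{F\in\mathcal{C}:F\cap S=\emptyset\}$ on $V\setminus S$; for a face $R$, $\operatorname{link}_R(\mathcal{C})=\{F\setminus R: R\subseteq F\in\mathcal{C}\}$ on $V\setminus R$. A minor is $\operatorname{link}_R(\mathcal{C}\setminus S)$ with $S\cap R=\emptyset$, $R$ a face. Alexander dual of $\mathcal{D}$ on $V$: $\{S\subseteq V: V\setminus S\notin\mathcal{D}\}$. $\mathcal{C}$ is $\beta$-avoiding if no minor is isomorphic (via a bijection of ground sets carrying faces to faces) to any of: $P_4$ (on $\{1,2,3,4\}$, facets $12,23,34$); $O_6$ (on $\{1,\dots,6\}$, faces the subsets containing none of $\{1,2\},\{3,4\},\{5,6\}$) or its dual $O_6^*$; $J_1$ (on $\{1,\dots,5\}$, facets $12,15,234,345$) or $J_1^*$ (facets $134,235,245$); $J_2$ (on $\{1,\dots,5\}$, facets $12,235,34,145$); $\partial\Delta_n\sqcup\{v\}$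 for $n\ge1$ (all proper subsets of an $(n+1)$-set together with one extra isolated vertex). *)

theory Defs
  imports Main
begin

definition simplicial_complex :: "'a set \<Rightarrow> 'a set set \<Rightarrow> bool" where
  "simplicial_complex V C \<longleftrightarrow> finite V \<and> (\<forall>F\<in>C. F \<subseteq> V) \<and> (\<forall>F\<in>C. \<forall>G. G \<subseteq> F \<longrightarrow> G \<in> C)"

text \<open>Induced subcomplex C minus S (its ground set is V - S).\<close>
definition cdel :: "'a set set \<Rightarrow> 'a set \<Rightarrow> 'a set set" where
  "cdel C S = {F \<in> C. F \<inter> S = {}}"

text \<open>Link of a face R (its ground set is V - R).\<close>
definition clink :: "'a set \<Rightarrow> 'a set set \<Rightarrow> 'a set set" where
  "clink R C = {F - R | F. F \<in> C \<and> R \<subseteq> F}"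

definition alex_dual :: "'a set \<Rightarrow> 'a set set \<Rightarrow> 'a set set" where
  "alex_dual V D = {S. S \<subseteq> V \<and> V - S \<notin> D}"

definition cplx_iso :: "'a set \<Rightarrow> 'a set set \<Rightarrow> 'b set \<Rightarrow> 'b set set \<Rightarrow> bool" where
  "cplx_iso V1 C1 V2 C2 \<longleftrightarrow>
     (\<exists>f. bij_betw f V1 V2 \<and> (\<forall>F. F \<subseteq> V1 \<longrightarrow> (F \<in> C1 \<longleftrightarrow> f ` F \<in> C2)))"

definition gen_cplx :: "'a set set \<Rightarrow> 'a set set" where
  "gen_cplx Fs = {F. \<exists>G\<in>Fs. F \<subseteq> G}"

definition P4 :: "nat set set" where
  "P4 = gen_cplx {{1,2},{2,3},{3,4}}"

definition O6 :: "nat set set" where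
  "O6 = {F. F \<subseteq> {1..6} \<and> \<not> {1,2} \<subseteq> F \<and> \<not> {3,4} \<subseteq> F \<and> \<not> {5,6} \<subseteq> F}"

definition O6_dual :: "nat set set" where
  "O6_dual = alex_dual {1..6} O6"

definition J1 :: "nat set set" where
  "J1 = gen_cplx {{1,2},{1,5},{2,3,4},{3,4,5}}"

definition J1_dual :: "nat set set" where
  "J1_dual = gen_cplx {{1,3,4},{2,3,5},{2,4,5}}"

definition J2 :: "nat set set" where
  "J2 = gen_cplx {{1,2},{2,3,5},{3,4},{1,4,5}}"

definition bdry_plus_pt :: "nat \<Rightarrow> nat set set" where
  "bdry_plus_pt n = {F. F \<subset> {0..n}} \<union> {{Suc n}}"

definition is_minor_of :: "'a set \<Rightarrow> 'a set set \<Rightarrow> 'a set \<Rightarrow> 'a set set \<Rightarrow> bool" where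
  "is_minor_of V C W M \<longleftrightarrow>
     (\<exists>S R. S \<subseteq> V \<and> S \<inter> R = {} \<and> R \<in> cdel C S \<and>
            W = V - S - R \<and> M = clink R (cdel C S))"

definition beta_avoiding :: "'a set \<Rightarrow> 'a set set \<Rightarrow> bool" where
  "beta_avoiding V C \<longleftrightarrow>
     (\<forall>W M. is_minor_of V C W M \<longrightarrow>
        \<not> cplx_iso W M {1..4} P4 \<and>
        \<not> cplx_iso W M {1..6} O6 \<and>
        \<not> cplx_iso W M {1..6} O6_dual \<and>
        \<not> cplx_iso W M {1..5} J1 \<and>
        \<not> cplx_iso W M {1..5} J1_dual \<and>
        \<not> cplx_iso W M {1..5} J2 \<and>
        (\<forall>n\<ge>1. \<not> cplx_iso W M {0..Suc n} (bdry_plus_pt n)))"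

definition skel_vertices :: "'a set \<Rightarrow> 'a set set \<Rightarrow> 'a set" where
  "skel_vertices V C = {v \<in> V. {v} \<in> C}"

definition skel_edges :: "'a set set \<Rightarrow> 'a set set" where
  "skel_edges C = {e \<in> C. card e = 2}"

definition clique_edges :: "'a set \<Rightarrow> 'a set set" where
  "clique_edges A = {{u, v} | u v. u \<in> A \<and> v \<in> A \<and> u \<noteq> v}"

end

theory Submission
  imports Defs
begin

lemma iso_cover:
  fixes h :: "nat \<Rightarrow> 'a" and U :: "nat set"
  assumes inj: "inj_on h U" and img: "h ` U = W"
    and dc: "\<forall>X\<in>M. \<forall>Y\<subseteq>X. Y\<in>M"
    and pos: "\<forall>T\<in>Pos. h ` T \<in> M" and neg: "\<forall>N\<in>Neg. h ` N \<notin> M"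
    and cov: "\<forall>F\<in>Pow U. ((\<exists>T\<in>Pos. F\<subseteq>T) \<and> F\<in>K) \<or> ((\<exists>N\<in>Neg. N\<subseteq>F) \<and> F\<notin>K)"
  shows "cplx_iso W M U K"
proof -
  let ?f = "inv_into U h"
  have b: "bij_betw h U W" using inj img by (simp add: bij_betw_def)
  have bij: "bij_betw ?f W U" using bij_betw_inv_into[OF b] .
  have "\<forall>F. F\<subseteq>W \<longrightarrow> (F\<in>M \<longleftrightarrow> ?f ` F \<in> K)"
  proof (intro allI impI)
    fix F assume F: "F\<subseteq>W"
    define G where "G = ?f ` F"
    have GU: "G \<subseteq> U" unfolding G_def using F img by (auto intro: inv_into_into)
    have hG: "h ` G = F" unfolding G_def using F img by (simp add: image_inv_into_cancel)
    from cov GU have "((\<exists>T\<in>Pos. G\<subseteq>T) \<and> G\<in>K) \<or> ((\<exists>N\<in>Neg. N\<subseteq>G) \<and> G\<notin>K)" by auto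
    then show "F\<in>M \<longleftrightarrow> ?f ` F \<in> K"
    proof
      assume "(\<exists>T\<in>Pos. G\<subseteq>T) \<and> G\<in>K"
      then obtain T where T: "T\<in>Pos" "G\<subseteq>T" "G\<in>K" by blast
      have "h ` T \<in> M" using pos T by blast
      moreover have "F \<subseteq> h ` T" using hG T by blast
      ultimately have "F\<in>M" using dc by blast
      then show ?thesis using T G_def by simp
    next
      assume "(\<exists>N\<in>Neg. N\<subseteq>G) \<and> G\<notin>K"
      then obtain N where N: "N\<in>Neg" "N\<subseteq>G" "G\<notin>K" by blast
      have "F\<notin>M"
      proof
        assume "F\<in>M"
        moreover have "h ` N \<subseteq> F" using hG N by blast
        ultimately have "h ` N \<in> M" using dc by blast
        then show False using neg N by blast
      qed
      then show ?thesis using N G_def by simp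
    qed
  qed
  then show ?thesis unfolding cplx_iso_def using bij by blast
qed

lemma clink_empty: "clink {} X = X" unfolding clink_def by auto

locale bac =
  fixes V :: "'a set" and C :: "'a set set"
  assumes sc: "simplicial_complex V C" and ba: "beta_avoiding V C" and ne: "{} \<in> C"
begin

lemma down: "X\<in>C \<Longrightarrow> Y\<subseteq>X \<Longrightarrow> Y\<in>C" using sc unfolding simplicial_complex_def by blast
lemma inV: "X\<in>C \<Longrightarrow> X\<subseteq>V" using sc unfolding simplicial_complex_def by blast

lemma minor_ind: assumes "W\<subseteq>V" shows "is_minor_of V C W {F\<in>C. F\<subseteq>W}"
  unfolding is_minor_of_def
proof (intro exI conjI)
  show "V - W \<subseteq> V" by blast
  show "(V-W) \<inter> {} = {}" by blast
  show "{} \<in> cdel C (V-W)" using ne unfolding cdel_def by blast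
  show "W = V - (V-W) - {}" using assms by blast
  show "{F \<in> C. F \<subseteq> W} = clink {} (cdel C (V - W))"
    unfolding clink_empty cdel_def using inV by blast
qed

lemma minor_lk: assumes "W\<subseteq>V" "{v}\<in>C" "v\<notin>W"
  shows "is_minor_of V C W {X. X\<subseteq>W \<and> insert v X \<in> C}"
  unfolding is_minor_of_def
proof (intro exI conjI)
  show "V - W - {v} \<subseteq> V" by blast
  show "(V - W - {v}) \<inter> {v} = {}" by blast
  show "{v} \<in> cdel C (V - W - {v})" using assms unfolding cdel_def by blast
  show "W = V - (V - W - {v}) - {v}" using assms by blast
  show "{X. X\<subseteq>W \<and> insert v X \<in> C} = clink {v} (cdel C (V - W - {v}))"
  proof
    show "{X. X\<subseteq>W \<and> insert v X \<in> C} \<subseteq> clink {v} (cdel C (V - W - {v}))"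
    proof
      fix X assume X: "X \<in> {X. X\<subseteq>W \<and> insert v X \<in> C}"
      then have "insert v X \<in> cdel C (V - W - {v})" unfolding cdel_def by auto
      moreover have "X = insert v X - {v}" using X assms(3) by auto
      ultimately show "X \<in> clink {v} (cdel C (V - W - {v}))" unfolding clink_def by blast
    qed
    show "clink {v} (cdel C (V - W - {v})) \<subseteq> {X. X\<subseteq>W \<and> insert v X \<in> C}"
    proof
      fix X assume "X \<in> clink {v} (cdel C (V - W - {v}))"
      then obtain F where F: "X = F - {v}" "F\<in>C" "F \<inter> (V-W-{v}) = {}" "v\<in>F"
        unfolding clink_def cdel_def by blast
      have "F\<subseteq>V" using inV F by blast
      then show "X \<in> {X. X\<subseteq>W \<and> insert v X \<in> C}" using F by (auto simp: insert_absorb)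
    qed
  qed
qed

lemma dc_ind: "\<forall>X\<in>{F\<in>C. F\<subseteq>W}. \<forall>Y\<subseteq>X. Y\<in>{F\<in>C. F\<subseteq>W}" using down by blast
lemma dc_lk: "\<forall>X\<in>{X. X\<subseteq>W \<and> insert v X \<in> C}. \<forall>Y\<subseteq>X. Y\<in>{X. X\<subseteq>W \<and> insert v X \<in> C}"
  using down by (smt (verit, ccfv_SIG) insert_mono mem_Collect_eq order_trans)

lemma u4: "{1..4::nat} = {1,2,3,4}" by auto
lemma u5: "{1..5::nat} = {1,2,3,4,5}" by auto
lemma u6: "{1..6::nat} = {1,2,3,4,5,6}" by auto
lemma u3: "{0..Suc 1} = {0,1,2::nat}" by auto
lemma u2: "{0..Suc 0} = {0,1::nat}" by auto

lemma no3_gen: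
  assumes m: "is_minor_of V C {a,b,c} M" and dc: "\<forall>X\<in>M. \<forall>Y\<subseteq>X. Y\<in>M"
    and d: "a\<noteq>b" "a\<noteq>c" "b\<noteq>c"
    and p: "{a}\<in>M" "{b}\<in>M" "{c}\<in>M" and n: "{a,b}\<notin>M" "{a,c}\<notin>M" "{b,c}\<notin>M"
  shows False
proof -
  let ?h = "\<lambda>i::nat. if i=0 then a else if i=1 then b else c"
  have "cplx_iso {a,b,c} M {0..Suc 1} (bdry_plus_pt 1)"
  proof (rule iso_cover[where h="?h" and Pos="{{0},{1},{2}}" and Neg="{{0,1},{0,2},{1,2}}"])
    show "inj_on ?h {0..Suc 1}" unfolding u3 using d by auto
    show "?h ` {0..Suc 1} = {a,b,c}" unfolding u3 by auto
    show "\<forall>X\<in>M. \<forall>Y\<subseteq>X. Y\<in>M" by fact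
    show "\<forall>T\<in>{{0},{1},{2}}. ?h ` T \<in> M" using p by (simp add: insert_commute)
    show "\<forall>N\<in>{{0,1},{0,2},{1,2}}. ?h ` N \<notin> M" using n by (simp add: insert_commute)
    show "\<forall>F\<in>Pow {0..Suc 1}. ((\<exists>T\<in>{{0},{1},{2}}. F\<subseteq>T) \<and> F\<in>bdry_plus_pt 1) \<or> ((\<exists>N\<in>{{0,1},{0,2},{1,2}}. N\<subseteq>F) \<and> F\<notin>bdry_plus_pt 1)"
      unfolding u3 bdry_plus_pt_def by (simp add: Pow_insert u2 psubset_eq) 
  qed
  then show False using ba m unfolding beta_avoiding_def by force
qed


lemma P4_gen:
  assumes m: "is_minor_of V C {a,b,c,d} M" and dc: "\<forall>X\<in>M. \<forall>Y\<subseteq>X. Y\<in>M"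
    and d: "a\<noteq>b" "a\<noteq>c" "a\<noteq>d" "b\<noteq>c" "b\<noteq>d" "c\<noteq>d"
    and p: "{a,b}\<in>M" "{b,c}\<in>M" "{c,d}\<in>M" and n: "{a,c}\<notin>M" "{b,d}\<notin>M" "{a,d}\<notin>M"
  shows False
proof -
  let ?h = "\<lambda>i::nat. if i=1 then a else if i=2 then b else if i=3 then c else d"
  have "cplx_iso {a,b,c,d} M {1..4} P4"
  proof (rule iso_cover[where h="?h" and Pos="{{1,2},{2,3},{3,4}}" and Neg="{{1,3},{2,4},{1,4}}"])
    show "inj_on ?h {1..4}" unfolding u4 using d by auto
    show "?h ` {1..4} = {a,b,c,d}" unfolding u4 by auto
    show "\<forall>X\<in>M. \<forall>Y\<subseteq>X. Y\<in>M" by fact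
    show "\<forall>T\<in>{{1,2},{2,3},{3,4}}. ?h ` T \<in> M" using p by (simp add: insert_commute)
    show "\<forall>N\<in>{{1,3},{2,4},{1,4}}. ?h ` N \<notin> M" using n by (simp add: insert_commute)
    show "\<forall>F\<in>Pow {1..4}. ((\<exists>T\<in>{{1,2},{2,3},{3,4}}. F\<subseteq>T) \<and> F\<in>P4) \<or> ((\<exists>N\<in>{{1,3},{2,4},{1,4}}. N\<subseteq>F) \<and> F\<notin>P4)"
      unfolding u4 P4_def gen_cplx_def by (simp add: Pow_insert)
  qed
  then show False using ba m unfolding beta_avoiding_def by force
qed

lemma no3_ind:
  assumes "{a}\<in>C" "{b}\<in>C" "{c}\<in>C" "a\<noteq>b" "a\<noteq>c" "b\<noteq>c" "{a,b}\<notin>C" "{a,c}\<notin>C" "{b,c}\<notin>C"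
  shows False
proof -
  have W: "{a,b,c} \<subseteq> V" using assms inV by blast
  show False
    by (rule no3_gen[OF minor_ind[OF W] dc_ind]) (use assms in auto)
qed

lemma no3_lk:
  assumes "{v,a}\<in>C" "{v,b}\<in>C" "{v,c}\<in>C" "a\<noteq>b" "a\<noteq>c" "b\<noteq>c" "v\<noteq>a" "v\<noteq>b" "v\<noteq>c"
    "{v,a,b}\<notin>C" "{v,a,c}\<notin>C" "{v,b,c}\<notin>C"
  shows False
proof -
  have W: "{a,b,c} \<subseteq> V" using assms inV by blast
  have v: "{v}\<in>C" using assms(1) down by blast
  show False
    by (rule no3_gen[OF minor_lk[OF W v] dc_lk]) (use assms in auto)
qed

lemma P4_ind:
  assumes "a\<noteq>b" "a\<noteq>c" "a\<noteq>d" "b\<noteq>c" "b\<noteq>d" "c\<noteq>d"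
    "{a,b}\<in>C" "{b,c}\<in>C" "{c,d}\<in>C" "{a,c}\<notin>C" "{b,d}\<notin>C" "{a,d}\<notin>C"
  shows False
proof -
  have W: "{a,b,c,d} \<subseteq> V" using assms inV by blast
  show False
    by (rule P4_gen[OF minor_ind[OF W] dc_ind]) (use assms in auto)
qed

lemma P4_lk:
  assumes "a\<noteq>b" "a\<noteq>c" "a\<noteq>d" "b\<noteq>c" "b\<noteq>d" "c\<noteq>d" "v\<noteq>a" "v\<noteq>b" "v\<noteq>c" "v\<noteq>d"
    "{v,a,b}\<in>C" "{v,b,c}\<in>C" "{v,c,d}\<in>C" "{v,a,c}\<notin>C" "{v,b,d}\<notin>C" "{v,a,d}\<notin>C"
  shows False
proof -
  have W: "{a,b,c,d} \<subseteq> V" using assms inV by blast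
  have v: "{v}\<in>C" using assms(11) down by blast
  show False
    by (rule P4_gen[OF minor_lk[OF W v] dc_lk]) (use assms in auto)
qed


lemma notin_sup: "{a,b}\<notin>C \<Longrightarrow> {a,b}\<subseteq>X \<Longrightarrow> X\<notin>C" using down by blast

lemma J1_ind:
  assumes d: "distinct [z1,z2,z3,z4,z5]"
    and p: "{z1,z2}\<in>C" "{z1,z5}\<in>C" "{z2,z3,z4}\<in>C" "{z3,z4,z5}\<in>C"
    and n: "{z1,z3}\<notin>C" "{z1,z4}\<notin>C" "{z2,z5}\<notin>C"
  shows False
proof -
  let ?W = "{z1,z2,z3,z4,z5}"
  have W: "?W \<subseteq> V" using p inV by blast
  let ?h = "\<lambda>i::nat. if i=1 then z1 else if i=2 then z2 else if i=3 then z3 else if i=4 then z4 else z5"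
  have "cplx_iso ?W {F\<in>C. F\<subseteq>?W} {1..5} J1"
  proof (rule iso_cover[where h="?h" and Pos="{{1,2},{1,5},{2,3,4},{3,4,5}}" and Neg="{{1,3},{1,4},{2,5}}"])
    show "inj_on ?h {1..5}" unfolding u5 using d by auto
    show "?h ` {1..5} = ?W" unfolding u5 by auto
    show "\<forall>X\<in>{F\<in>C. F\<subseteq>?W}. \<forall>Y\<subseteq>X. Y\<in>{F\<in>C. F\<subseteq>?W}" by (rule dc_ind)
    show "\<forall>T\<in>{{1,2},{1,5},{2,3,4},{3,4,5}}. ?h ` T \<in> {F\<in>C. F\<subseteq>?W}" using p by (simp add: insert_commute)
    show "\<forall>N\<in>{{1,3},{1,4},{2,5}}. ?h ` N \<notin> {F\<in>C. F\<subseteq>?W}" using n by (simp add: insert_commute)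
    show "\<forall>F\<in>Pow {1..5}. ((\<exists>T\<in>{{1,2},{1,5},{2,3,4},{3,4,5}}. F\<subseteq>T) \<and> F\<in>J1) \<or> ((\<exists>N\<in>{{1,3},{1,4},{2,5}}. N\<subseteq>F) \<and> F\<notin>J1)"
      unfolding u5 J1_def gen_cplx_def by (simp add: Pow_insert)
  qed
  then show False using ba minor_ind[OF W] unfolding beta_avoiding_def by blast
qed

lemma J2_ind:
  assumes d: "distinct [z1,z2,z3,z4,z5]"
    and p: "{z1,z2}\<in>C" "{z2,z3,z5}\<in>C" "{z3,z4}\<in>C" "{z1,z4,z5}\<in>C"
    and n: "{z1,z3}\<notin>C" "{z2,z4}\<notin>C" "{z1,z2,z5}\<notin>C" "{z3,z4,z5}\<notin>C"
  shows False
proof -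
  let ?W = "{z1,z2,z3,z4,z5}"
  have W: "?W \<subseteq> V" using p inV by blast
  let ?h = "\<lambda>i::nat. if i=1 then z1 else if i=2 then z2 else if i=3 then z3 else if i=4 then z4 else z5"
  have "cplx_iso ?W {F\<in>C. F\<subseteq>?W} {1..5} J2"
  proof (rule iso_cover[where h="?h" and Pos="{{1,2},{2,3,5},{3,4},{1,4,5}}" and Neg="{{1,3},{2,4},{1,2,5},{3,4,5}}"])
    show "inj_on ?h {1..5}" unfolding u5 using d by auto
    show "?h ` {1..5} = ?W" unfolding u5 by auto
    show "\<forall>X\<in>{F\<in>C. F\<subseteq>?W}. \<forall>Y\<subseteq>X. Y\<in>{F\<in>C. F\<subseteq>?W}" by (rule dc_ind)
    show "\<forall>T\<in>{{1,2},{2,3,5},{3,4},{1,4,5}}. ?h ` T \<in> {F\<in>C. F\<subseteq>?W}" using p by (simp add: insert_commute)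
    show "\<forall>N\<in>{{1,3},{2,4},{1,2,5},{3,4,5}}. ?h ` N \<notin> {F\<in>C. F\<subseteq>?W}" using n by (simp add: insert_commute)
    show "\<forall>F\<in>Pow {1..5}. ((\<exists>T\<in>{{1,2},{2,3,5},{3,4},{1,4,5}}. F\<subseteq>T) \<and> F\<in>J2) \<or> ((\<exists>N\<in>{{1,3},{2,4},{1,2,5},{3,4,5}}. N\<subseteq>F) \<and> F\<notin>J2)"
      unfolding u5 J2_def gen_cplx_def by (simp add: Pow_insert)
  qed
  then show False using ba minor_ind[OF W] unfolding beta_avoiding_def by blast
qed

lemma O6_ind:
  assumes d: "distinct [z1,z2,z3,z4,z5,z6]"
    and p: "{z1,z3,z5}\<in>C" "{z1,z3,z6}\<in>C" "{z1,z4,z5}\<in>C" "{z1,z4,z6}\<in>C"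
           "{z2,z3,z5}\<in>C" "{z2,z3,z6}\<in>C" "{z2,z4,z5}\<in>C" "{z2,z4,z6}\<in>C"
    and n: "{z1,z2}\<notin>C" "{z3,z4}\<notin>C" "{z5,z6}\<notin>C"
  shows False
proof -
  let ?W = "{z1,z2,z3,z4,z5,z6}"
  have W: "?W \<subseteq> V" using p inV by blast
  let ?h = "\<lambda>i::nat. if i=1 then z1 else if i=2 then z2 else if i=3 then z3 else if i=4 then z4 else if i=5 then z5 else z6"
  have "cplx_iso ?W {F\<in>C. F\<subseteq>?W} {1..6} O6"
  proof (rule iso_cover[where h="?h" and Pos="{{1,3,5},{1,3,6},{1,4,5},{1,4,6},{2,3,5},{2,3,6},{2,4,5},{2,4,6}}" and Neg="{{1,2},{3,4},{5,6}}"])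
    show "inj_on ?h {1..6}" unfolding u6 using d by auto
    show "?h ` {1..6} = ?W" unfolding u6 by auto
    show "\<forall>X\<in>{F\<in>C. F\<subseteq>?W}. \<forall>Y\<subseteq>X. Y\<in>{F\<in>C. F\<subseteq>?W}" by (rule dc_ind)
    show "\<forall>T\<in>{{1,3,5},{1,3,6},{1,4,5},{1,4,6},{2,3,5},{2,3,6},{2,4,5},{2,4,6}}. ?h ` T \<in> {F\<in>C. F\<subseteq>?W}" using p by (simp add: insert_commute)
    show "\<forall>N\<in>{{1,2},{3,4},{5,6}}. ?h ` N \<notin> {F\<in>C. F\<subseteq>?W}" using n by (simp add: insert_commute)
    show "\<forall>F\<in>Pow {1..6}. ((\<exists>T\<in>{{1,3,5},{1,3,6},{1,4,5},{1,4,6},{2,3,5},{2,3,6},{2,4,5},{2,4,6}}. F\<subseteq>T) \<and> F\<in>O6) \<or> ((\<exists>N\<in>{{1,2},{3,4},{5,6}}. N\<subseteq>F) \<and> F\<notin>O6)"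
      unfolding u6 O6_def by (simp add: Pow_insert)
  qed
  then show False using ba minor_ind[OF W] unfolding beta_avoiding_def by blast
qed



lemma J1_conf:
  assumes d: "distinct [x1,x2,x3,x4,x5]"
    and e: "{x1,x2}\<in>C" "{x1,x5}\<in>C" "{x2,x3}\<in>C" "{x2,x4}\<in>C" "{x3,x4}\<in>C" "{x3,x5}\<in>C" "{x4,x5}\<in>C"
    and n: "{x1,x3}\<notin>C" "{x1,x4}\<notin>C" "{x2,x5}\<notin>C"
  shows False
proof -
  have t5: "{x5,x3,x4}\<in>C"
  proof (rule ccontr)
    assume a: "{x5,x3,x4}\<notin>C"
    have "{x5,x1,x3}\<notin>C" by (rule notin_sup[OF n(1)]) auto
    moreover have "{x5,x1,x4}\<notin>C" by (rule notin_sup[OF n(2)]) auto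
    ultimately show False using d e a
      by (intro no3_lk[of x5 x1 x3 x4]) (auto simp: insert_commute)
  qed
  have t2: "{x2,x3,x4}\<in>C"
  proof (rule ccontr)
    assume a: "{x2,x3,x4}\<notin>C"
    have "{x2,x1,x3}\<notin>C" by (rule notin_sup[OF n(1)]) auto
    moreover have "{x2,x1,x4}\<notin>C" by (rule notin_sup[OF n(2)]) auto
    ultimately show False using d e a
      by (intro no3_lk[of x2 x1 x3 x4]) (auto simp: insert_commute)
  qed
  show False using d e n t2 t5 by (intro J1_ind[OF d]) (auto simp: insert_commute)
qed


lemma Lk:
  assumes d: "distinct [v,p,q,r,s]"
    and e: "{v,p}\<in>C" "{v,q}\<in>C" "{v,r}\<in>C" "{v,s}\<in>C" and n: "{p,q}\<notin>C" "{r,s}\<notin>C"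
  shows "({v,p,r}\<in>C \<longleftrightarrow> {v,q,s}\<in>C) \<and> ({v,p,s}\<in>C \<longleftrightarrow> {v,q,r}\<in>C) \<and> ({v,p,r}\<in>C \<or> {v,p,s}\<in>C)"
proof -
  have npq: "{v,p,q}\<notin>C" by (rule notin_sup[OF n(1)]) auto
  have nrs: "{v,r,s}\<notin>C" by (rule notin_sup[OF n(2)]) auto
  have 1: "{v,p,r}\<in>C \<or> {v,q,r}\<in>C" using no3_lk[of v p q r] d e npq by auto
  have 2: "{v,p,s}\<in>C \<or> {v,q,s}\<in>C" using no3_lk[of v p q s] d e npq by auto
  have 3: "{v,p,r}\<in>C \<or> {v,p,s}\<in>C" using no3_lk[of v p r s] d e nrs by auto
  have 4: "{v,q,r}\<in>C \<or> {v,q,s}\<in>C" using no3_lk[of v q r s] d e nrs by auto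
  have 5: False if "{v,p,r}\<notin>C" "{v,p,s}\<in>C" "{v,q,s}\<in>C" "{v,q,r}\<in>C"
    using that d npq nrs by (intro P4_lk[of p s q r v]) (auto simp: insert_commute)
  have 6: False if "{v,p,s}\<notin>C" "{v,p,r}\<in>C" "{v,q,s}\<in>C" "{v,q,r}\<in>C"
    using that d npq nrs by (intro P4_lk[of p r q s v]) (auto simp: insert_commute)
  have 7: False if "{v,q,r}\<notin>C" "{v,p,r}\<in>C" "{v,q,s}\<in>C" "{v,p,s}\<in>C"
    using that d npq nrs by (intro P4_lk[of r p s q v]) (auto simp: insert_commute)
  have 8: False if "{v,q,s}\<notin>C" "{v,p,r}\<in>C" "{v,q,r}\<in>C" "{v,p,s}\<in>C"
    using that d npq nrs by (intro P4_lk[of s p r q v]) (auto simp: insert_commute)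
  show ?thesis using 1 2 3 4 5 6 7 8 by blast
qed


lemma Oct_conf:
  assumes d: "distinct [y1,y2,y3,y4,y5,y6]"
    and n: "{y1,y2}\<notin>C" "{y3,y4}\<notin>C" "{y5,y6}\<notin>C"
    and e: "{y1,y3}\<in>C" "{y1,y4}\<in>C" "{y1,y5}\<in>C" "{y1,y6}\<in>C" "{y2,y3}\<in>C" "{y2,y4}\<in>C"
      "{y2,y5}\<in>C" "{y2,y6}\<in>C" "{y3,y5}\<in>C" "{y3,y6}\<in>C" "{y4,y5}\<in>C" "{y4,y6}\<in>C"
  shows False
proof -
  have L1: "({y1,y3,y5}\<in>C \<longleftrightarrow> {y1,y4,y6}\<in>C) \<and> ({y1,y3,y6}\<in>C \<longleftrightarrow> {y1,y4,y5}\<in>C) \<and> ({y1,y3,y5}\<in>C \<or> {y1,y3,y6}\<in>C)"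
    by (rule Lk) (use d n e in \<open>auto simp: insert_commute\<close>)
  have L3: "({y3,y1,y5}\<in>C \<longleftrightarrow> {y3,y2,y6}\<in>C) \<and> ({y3,y1,y6}\<in>C \<longleftrightarrow> {y3,y2,y5}\<in>C) \<and> ({y3,y1,y5}\<in>C \<or> {y3,y1,y6}\<in>C)"
    by (rule Lk) (use d n e in \<open>auto simp: insert_commute\<close>)
  have L5: "({y5,y1,y3}\<in>C \<longleftrightarrow> {y5,y2,y4}\<in>C) \<and> ({y5,y1,y4}\<in>C \<longleftrightarrow> {y5,y2,y3}\<in>C) \<and> ({y5,y1,y3}\<in>C \<or> {y5,y1,y4}\<in>C)"
    by (rule Lk) (use d n e in \<open>auto simp: insert_commute\<close>)
  have L6: "({y6,y1,y3}\<in>C \<longleftrightarrow> {y6,y2,y4}\<in>C) \<and> ({y6,y1,y4}\<in>C \<longleftrightarrow> {y6,y2,y3}\<in>C) \<and> ({y6,y1,y3}\<in>C \<or> {y6,y1,y4}\<in>C)"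
    by (rule Lk) (use d n e in \<open>auto simp: insert_commute\<close>)
  have q: "{y3,y1,y5} = {y1,y3,y5}" "{y3,y2,y6} = {y2,y3,y6}" "{y3,y1,y6} = {y1,y3,y6}" "{y3,y2,y5} = {y2,y3,y5}"
    "{y5,y1,y3} = {y1,y3,y5}" "{y5,y2,y4} = {y2,y4,y5}" "{y5,y1,y4} = {y1,y4,y5}" "{y5,y2,y3} = {y2,y3,y5}"
    "{y6,y1,y3} = {y1,y3,y6}" "{y6,y2,y4} = {y2,y4,y6}" "{y6,y1,y4} = {y1,y4,y6}" "{y6,y2,y3} = {y2,y3,y6}"
    by auto
  note L3' = L3[unfolded q] and L5' = L5[unfolded q] and L6' = L6[unfolded q]
  show False
  proof (cases "{y1,y3,y5}\<in>C")
    case a: True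
    show False
    proof (cases "{y1,y3,y6}\<in>C")
      case True
      then show False using L1 L3' L5' L6' a
        by (intro O6_ind[OF d]) (use n in blast)+
    next
      case False
      have "{y3,y6,y2} = {y2,y3,y6}" "{y5,y4,y2} = {y2,y4,y5}" "{y5,y3,y2} = {y2,y3,y5}" "{y6,y4,y2} = {y2,y4,y6}"
        "{y5,y3} = {y3,y5}" "{y6,y4} = {y4,y6}"  by auto
      then show False using J2_ind[of y5 y3 y6 y4 y2] L1 L3' L5' L6' a False d e n
        by (auto simp: insert_commute)
    qed
  next
    case False
    show False using J2_ind[of y6 y3 y5 y4 y2] L1 L3' L5' L6' False d e n
      by (auto simp: insert_commute)
  qed
qed


definition adj :: "'b set set \<Rightarrow> 'b \<Rightarrow> 'b \<Rightarrow> bool" where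
  "adj K x y \<longleftrightarrow> x \<noteq> y \<and> {x,y} \<in> K"
definition nadj :: "'b set set \<Rightarrow> 'b \<Rightarrow> 'b \<Rightarrow> bool" where
  "nadj K x y \<longleftrightarrow> {x} \<in> K \<and> {y} \<in> K \<and> x \<noteq> y \<and> {x,y} \<notin> K"

lemma adj_sym: "adj K x y \<longleftrightarrow> adj K y x" unfolding adj_def by (auto simp: insert_commute)
lemma nadj_sym: "nadj K x y \<longleftrightarrow> nadj K y x" unfolding nadj_def by (auto simp: insert_commute)

lemma g_tri: "nadj C a b \<Longrightarrow> nadj C b c \<Longrightarrow> nadj C a c \<Longrightarrow> False"
  unfolding nadj_def by (intro no3_ind[of a b c]) (auto simp: insert_commute)

lemma g_P4: assumes "nadj C a b" "nadj C b c" "nadj C c d" "adj C a c" "adj C b d" "adj C a d" shows False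
  using assms unfolding adj_def nadj_def by (intro P4_ind[of b d a c]) (auto simp: insert_commute)

lemma g_J1: assumes "nadj C q p" "nadj C q r" "nadj C s t" "adj C p r" "adj C p s" "adj C p t"
   "adj C q s" "adj C q t" "adj C r s" "adj C r t" shows False
  using assms unfolding adj_def nadj_def by (intro J1_conf[of q s p r t]) (auto simp: insert_commute)

lemma g_oct: assumes "nadj C a b" "nadj C c d" "nadj C e f" "adj C a c" "adj C a d" "adj C a e" "adj C a f"
  "adj C b c" "adj C b d" "adj C b e" "adj C b f" "adj C c e" "adj C c f" "adj C d e" "adj C d f" shows False
  using assms unfolding adj_def nadj_def by (intro Oct_conf[of a b c d e f]) (auto simp: insert_commute)

lemma dich: "{x}\<in>C \<Longrightarrow> {y}\<in>C \<Longrightarrow> x\<noteq>y \<Longrightarrow> \<not> nadj C x y \<Longrightarrow> adj C x y"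
  unfolding adj_def nadj_def by blast

lemma adj_v: "adj C x y \<Longrightarrow> {x}\<in>C \<and> {y}\<in>C" unfolding adj_def using down by blast
lemma nadj_v: "nadj C x y \<Longrightarrow> {x}\<in>C \<and> {y}\<in>C \<and> x\<noteq>y" unfolding nadj_def by blast

lemma K2: assumes "nadj C u w" "nadj C u x" "nadj C x y" shows "nadj C w y"
proof (rule ccontr)
  assume ny: "\<not> nadj C w y"
  have xw: "x \<noteq> w" using ny assms(3) by auto
  have yu: "y \<noteq> u" using ny assms(1) by (auto simp: nadj_sym)
  have yw: "y \<noteq> w" using g_tri[of u x w] assms by (auto simp: nadj_sym)
  have awy: "adj C w y" using dich[of w y] ny yw nadj_v assms by blast
  have "\<not> nadj C u y" using g_tri[of u x y] assms by blast
  then have auy: "adj C u y" using dich[of u y] yu nadj_v assms by metis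
  have "\<not> nadj C x w" using g_tri[of u x w] assms by (auto simp: nadj_sym)
  then have axw: "adj C x w" using dich[of x w] xw nadj_v assms by metis
  show False using g_P4[of y x u w] assms awy auy axw by (auto simp: nadj_sym adj_sym)
qed


lemma excl: "adj C x y \<Longrightarrow> \<not> nadj C x y" unfolding adj_def nadj_def by blast

lemma Vs_iff: "v \<in> skel_vertices V C \<longleftrightarrow> {v}\<in>C" unfolding skel_vertices_def using inV by blast
lemma edge_iff: "e \<in> skel_edges C \<longleftrightarrow> (\<exists>x y. adj C x y \<and> e = {x,y})"
  unfolding skel_edges_def adj_def card_2_iff by auto
lemma clique_iff: "e \<in> clique_edges A \<longleftrightarrow> (\<exists>x y. x\<in>A \<and> y\<in>A \<and> x\<noteq>y \<and> e={x,y})"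
  unfolding clique_edges_def by blast

theorem main:
  shows "skel_edges C = clique_edges (skel_vertices V C)
      \<or> (\<exists>A B. A \<union> B = skel_vertices V C \<and> skel_edges C = clique_edges A \<union> clique_edges B)
      \<or> (\<exists>a b c d P. distinct [a, b, c, d] \<and> {a, b, c, d} \<inter> P = {}
            \<and> skel_vertices V C = {a, b, c, d} \<union> P
            \<and> skel_edges C = {{a, b}, {b, c}, {c, d}, {d, a}} \<union> clique_edges P
                               \<union> {{x, y} | x y. x \<in> {a, b, c, d} \<and> y \<in> P})"
proof (cases "\<exists>u w. nadj C u w")
  case False
  have "skel_edges C = clique_edges (skel_vertices V C)"
  proof (rule set_eqI)
    fix e
    show "e \<in> skel_edges C \<longleftrightarrow> e \<in> clique_edges (skel_vertices V C)"
      unfolding edge_iff clique_iff Vs_iff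
    proof
      assume "\<exists>x y. adj C x y \<and> e = {x, y}"
      then show "\<exists>x y. {x} \<in> C \<and> {y} \<in> C \<and> x \<noteq> y \<and> e = {x, y}"
        unfolding adj_def using down by blast
    next
      assume "\<exists>x y. {x} \<in> C \<and> {y} \<in> C \<and> x \<noteq> y \<and> e = {x, y}"
      then show "\<exists>x y. adj C x y \<and> e = {x, y}" using dich False by metis
    qed
  qed
  then show ?thesis by blast
next
  case True
  then obtain u w where uw: "nadj C u w" by blast
  have wu: "nadj C w u" using uw by (simp add: nadj_sym)
  have K1: "nadj C x y" if a: "nadj C u x" "nadj C w y" for x y
  proof (rule ccontr)
    assume nxy: "\<not> nadj C x y"
    have xw: "x \<noteq> w" using nxy a by auto
    have xu: "nadj C x u" using a(1) by (simp add: nadj_sym)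
    have wx': "nadj C y w" using a(2) by (simp add: nadj_sym)
    have yu: "y \<noteq> u" using nxy xu by auto
    have xy: "x \<noteq> y" using g_tri[of u x w] a uw wx' by auto
    have axy: "adj C x y" using dich[of x y] nxy xy nadj_v a by blast
    have "\<not> nadj C x w" using g_tri[of u x w] a uw by blast
    then have axw: "adj C x w" using dich[of x w] xw nadj_v a uw by blast
    have "\<not> nadj C u y" using g_tri[of u w y] a uw by blast
    then have auy: "adj C u y" using dich[of u y] yu nadj_v a uw by metis
    show False using g_P4[of x u w y] xu uw a(2) axw auy axy by blast
  qed
  have K1': "nadj C x y" if a: "nadj C w x" "nadj C u y" for x y
    using K1[of y x] a by (simp add: nadj_sym)
  have disj: "\<not> (nadj C u x \<and> nadj C w x)" for x using g_tri[of u x w] uw by (auto simp: nadj_sym)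
  show ?thesis
  proof (cases "\<forall>x y. nadj C x y \<longrightarrow> (nadj C u x \<and> nadj C w y) \<or> (nadj C w x \<and> nadj C u y)")
    case T: True
    let ?Vs = "skel_vertices V C"
    let ?A = "{v\<in>?Vs. \<not> nadj C u v}" and ?B = "{v\<in>?Vs. \<not> nadj C w v}"
    have AB: "?A \<union> ?B = ?Vs" using disj by blast
    have "skel_edges C = clique_edges ?A \<union> clique_edges ?B"
    proof (rule set_eqI)
      fix e
      show "e \<in> skel_edges C \<longleftrightarrow> e \<in> clique_edges ?A \<union> clique_edges ?B"
      proof
        assume "e \<in> skel_edges C"
        then obtain x y where xy: "adj C x y" "e = {x,y}" unfolding edge_iff by blast
        have v: "x \<in> ?Vs" "y \<in> ?Vs" "x \<noteq> y" using adj_v[OF xy(1)] xy(1) Vs_iff by (auto simp: adj_def)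
        have n1: "\<not> (nadj C u x \<and> nadj C w y)" using K1 excl xy by blast
        have n2: "\<not> (nadj C w x \<and> nadj C u y)" using K1' excl xy by blast
        have "(\<not> nadj C u x \<and> \<not> nadj C u y) \<or> (\<not> nadj C w x \<and> \<not> nadj C w y)"
          using n1 n2 disj[of x] disj[of y] by blast
        then show "e \<in> clique_edges ?A \<union> clique_edges ?B" unfolding Un_iff clique_iff using v xy by blast
      next
        assume "e \<in> clique_edges ?A \<union> clique_edges ?B"
        then obtain x y where xy: "x \<in> ?Vs" "y\<in>?Vs" "x\<noteq>y" "e={x,y}"
          and c: "(\<not> nadj C u x \<and> \<not> nadj C u y) \<or> (\<not> nadj C w x \<and> \<not> nadj C w y)"
          unfolding Un_iff clique_iff by blast
        have "\<not> nadj C x y" using T c by blast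
        then have "adj C x y" using dich xy Vs_iff by blast
        then show "e \<in> skel_edges C" unfolding edge_iff using xy by blast
      qed
    qed
    then show ?thesis using AB by blast
  next
    case False
    then obtain x y where xy: "nadj C x y"
      and nd: "\<not> ((nadj C u x \<and> nadj C w y) \<or> (nadj C w x \<and> nadj C u y))" by blast
    have yx: "nadj C y x" using xy by (simp add: nadj_sym)
    have nux: "\<not> nadj C u x" using K2[of u w x y] uw xy nd by blast
    have nwx: "\<not> nadj C w x" using K2[of w u x y] wu xy nd by blast
    have nuy: "\<not> nadj C u y" using K2[of u w y x] uw yx nd by blast
    have nwy: "\<not> nadj C w y" using K2[of w u y x] wu yx nd by blast
    have ne: "x \<noteq> u" "x \<noteq> w" "y \<noteq> u" "y \<noteq> w" "u \<noteq> w" "x \<noteq> y"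
      using nux nwx nuy nwy uw wu xy nadj_v[of u w] nadj_v[of x y] by auto
    have vs: "{u}\<in>C" "{w}\<in>C" "{x}\<in>C" "{y}\<in>C" using uw xy nadj_v by blast+
    have aux: "adj C u x" using dich[of u x] vs ne nux by metis
    have awx: "adj C w x" using dich[of w x] vs ne nwx by metis
    have auy: "adj C u y" using dich[of u y] vs ne nuy by metis
    have awy: "adj C w y" using dich[of w y] vs ne nwy by metis
    have sy: "adj C x u" "adj C x w" "adj C y u" "adj C y w" using aux awx auy awy by (simp_all add: adj_sym)
    define P where "P = skel_vertices V C - {u,x,w,y}"
    have Pv: "p \<in> P \<longleftrightarrow> {p}\<in>C \<and> p \<noteq> u \<and> p \<noteq> x \<and> p \<noteq> w \<and> p \<noteq> y" for p
      unfolding P_def using Vs_iff by auto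
    have pu: "\<not> nadj C u p \<and> \<not> nadj C w p" if p: "p \<in> P" for p
    proof -
      have pp: "{p}\<in>C" "p \<noteq> u" "p \<noteq> x" "p \<noteq> w" "p \<noteq> y" using p Pv by auto
      have 1: "\<not> nadj C u p"
      proof
        assume up: "nadj C u p"
        have "\<not> nadj C p x" using K2[of u w p x] uw up nwx by blast
        then have apx: "adj C p x" using dich[of p x] pp vs by metis
        have "\<not> nadj C p y" using K2[of u w p y] uw up nwy by blast
        then have apy: "adj C p y" using dich[of p y] pp vs by metis
        have "\<not> nadj C p w" using g_tri[of u p w] uw up by blast
        then have apw: "adj C p w" using dich[of p w] pp vs by metis
        show False using g_J1[of u p w x y] up uw xy apw apx apy aux auy awx awy by blast
      qed
      have 2: "\<not> nadj C w p"
      proof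
        assume wp: "nadj C w p"
        have "\<not> nadj C p x" using K2[of w u p x] wu wp nux by blast
        then have apx: "adj C p x" using dich[of p x] pp vs by metis
        have "\<not> nadj C p y" using K2[of w u p y] wu wp nuy by blast
        then have apy: "adj C p y" using dich[of p y] pp vs by metis
        have apu: "adj C p u" using dich[of p u] pp vs 1 by (simp add: nadj_sym)
        show False using g_J1[of w p u x y] wp wu xy apu apx apy aux auy awx awy by blast
      qed
      show ?thesis using 1 2 by blast
    qed
    have px: "\<not> nadj C x p \<and> \<not> nadj C y p" if p: "p \<in> P" for p
    proof -
      have pp: "{p}\<in>C" "p \<noteq> u" "p \<noteq> x" "p \<noteq> w" "p \<noteq> y" using p Pv by auto
      have apu: "adj C p u" using dich[of p u] pp vs pu[OF p] by (simp add: nadj_sym)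
      have apw: "adj C p w" using dich[of p w] pp vs pu[OF p] by (simp add: nadj_sym)
      have 1: "\<not> nadj C x p"
      proof
        assume xp: "nadj C x p"
        have "\<not> nadj C p y" using g_tri[of x p y] xp xy by blast
        then have apy: "adj C p y" using dich[of p y] pp vs by metis
        show False using g_J1[of x p y u w] xp xy uw apy apu apw sy by blast
      qed
      have 2: "\<not> nadj C y p"
      proof
        assume yp: "nadj C y p"
        have "\<not> nadj C p x" using g_tri[of y p x] yp yx by blast
        then have apx: "adj C p x" using dich[of p x] pp vs by metis
        show False using g_J1[of y p x u w] yp yx uw apx apu apw sy by blast
      qed
      show ?thesis using 1 2 by blast
    qed
    have adjP: "adj C s t" if "s \<in> {u,x,w,y}" "t \<in> P" for s t
    proof -
      have pp: "{t}\<in>C" "t \<noteq> u" "t \<noteq> x" "t \<noteq> w" "t \<noteq> y" using that Pv by auto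
      have "\<not> nadj C s t" using that pu[of t] px[of t] by blast
      then show ?thesis using dich[of s t] pp vs that by auto
    qed
    have PP: "adj C p q" if "p \<in> P" "q \<in> P" "p \<noteq> q" for p q
    proof -
      have "\<not> nadj C p q"
      proof
        assume pq: "nadj C p q"
        show False using g_oct[of u w x y p q] uw xy pq aux auy awx awy adjP[of u p] adjP[of u q] adjP[of w p] adjP[of w q] adjP[of x p] adjP[of x q] adjP[of y p] adjP[of y q] that by blast
      qed
      then show ?thesis using dich[of p q] that Pv by blast
    qed
    have nuw: "\<not> adj C u w" "\<not> adj C w u" "\<not> adj C x y" "\<not> adj C y x"
      using excl uw wu xy yx by blast+
    have "distinct [u, x, w, y] \<and> {u, x, w, y} \<inter> P = {}
            \<and> skel_vertices V C = {u, x, w, y} \<union> P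
            \<and> skel_edges C = {{u, x}, {x, w}, {w, y}, {y, u}} \<union> clique_edges P
                               \<union> {{s, t} | s t. s \<in> {u, x, w, y} \<and> t \<in> P}"
    proof (intro conjI)
      show "distinct [u, x, w, y]" using ne by auto
      show "{u, x, w, y} \<inter> P = {}" using Pv by auto
      show "skel_vertices V C = {u, x, w, y} \<union> P" using Pv vs Vs_iff by auto
      show "skel_edges C = {{u, x}, {x, w}, {w, y}, {y, u}} \<union> clique_edges P
                               \<union> {{s, t} | s t. s \<in> {u, x, w, y} \<and> t \<in> P}"
      proof (rule set_eqI)
        fix e
        show "e \<in> skel_edges C \<longleftrightarrow> e \<in> {{u, x}, {x, w}, {w, y}, {y, u}} \<union> clique_edges P
                               \<union> {{s, t} | s t. s \<in> {u, x, w, y} \<and> t \<in> P}"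
        proof
          assume "e \<in> skel_edges C"
          then obtain s t where st: "adj C s t" "e = {s,t}" unfolding edge_iff by blast
          have sv: "{s}\<in>C" "{t}\<in>C" "s\<noteq>t" using adj_v[OF st(1)] st(1) by (auto simp: adj_def)
          show "e \<in> {{u, x}, {x, w}, {w, y}, {y, u}} \<union> clique_edges P
                               \<union> {{s, t} | s t. s \<in> {u, x, w, y} \<and> t \<in> P}"
          proof (cases "s \<in> P")
            case sP: True
            show ?thesis
            proof (cases "t \<in> P")
              case True
              have "e \<in> clique_edges P" unfolding clique_iff using sP True st sv by blast
              then show ?thesis by blast
            next
              case False
              then have "t \<in> {u,x,w,y}" using sv Pv by blast
              moreover have "e = {t,s}" using st by auto
              ultimately show ?thesis using sP by blast
            qed
          next
            case sN: False
            then have s4: "s \<in> {u,x,w,y}" using sv Pv by blast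
            show ?thesis
            proof (cases "t \<in> P")
              case True
              then show ?thesis using s4 st by blast
            next
              case False
              then have t4: "t \<in> {u,x,w,y}" using sv Pv by blast
              show ?thesis using s4 t4 st sv nuw by (auto simp: doubleton_eq_iff)
            qed
          qed
        next
          assume "e \<in> {{u, x}, {x, w}, {w, y}, {y, u}} \<union> clique_edges P
                               \<union> {{s, t} | s t. s \<in> {u, x, w, y} \<and> t \<in> P}"
          then consider (a) "e \<in> {{u, x}, {x, w}, {w, y}, {y, u}}" | (b) "e \<in> clique_edges P"
            | (c) "e \<in> {{s, t} | s t. s \<in> {u, x, w, y} \<and> t \<in> P}" by blast
          then show "e \<in> skel_edges C"
          proof cases
            case a
            then show ?thesis unfolding edge_iff using aux sy(2) awy sy(3) by blast
          next
            case b
            then show ?thesis unfolding edge_iff clique_iff using PP by blast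
          next
            case c
            then show ?thesis unfolding edge_iff using adjP by blast
          qed
        qed
      qed
    qed
    then show ?thesis by (intro disjI2 exI)
  qed
qed

end

theorem lemma5p3:
  fixes V :: "'a set" and C :: "'a set set"
  assumes "simplicial_complex V C" and "beta_avoiding V C"
  shows "skel_edges C = clique_edges (skel_vertices V C)
      \<or> (\<exists>A B. A \<union> B = skel_vertices V C \<and> skel_edges C = clique_edges A \<union> clique_edges B)
      \<or> (\<exists>a b c d P. distinct [a, b, c, d] \<and> {a, b, c, d} \<inter> P = {}
            \<and> skel_vertices V C = {a, b, c, d} \<union> P
            \<and> skel_edges C = {{a, b}, {b, c}, {c, d}, {d, a}} \<union> clique_edges P
                               \<union> {{x, y} | x y. x \<in> {a, b, c, d} \<and> y \<in> P})"
proof (cases "C = {}")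
  case True
  have "skel_edges C = {}" "skel_vertices V C = {}" "clique_edges ({}::'a set) = {}"
    using True unfolding skel_edges_def skel_vertices_def clique_edges_def by auto
  then show ?thesis by simp
next
  case False
  then obtain F where "F \<in> C" by blast
  then have "{} \<in> C" using assms(1) unfolding simplicial_complex_def by blast
  then interpret bac V C using assms by unfold_locales
  show ?thesis by (rule main)
qed

end
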